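(* Let $n\ge1$. The path $P_n$ admits an extended irregular dominating labeling if and only if $n\ne 2,3$.
   Context: $P_n$ is the path on $n$ vertices $[x_1,\dots,x_n]$ with edges $\{x_i,x_{i+1}\}$, $1\le i\le n-1$. In a finite simple graph $\Gamma=(V,E)$ with distance $d$, a vertex $v$ carrying a non-negative integer label $\ell$ dominates (covers) exactly the vertices $u$ with $d(u,v)=\ell$; a vertex labeled $0$ dominates only itself. An extended irregular dominating labeling is a labeling $\lambda:S\to\mathbb{Z}_{\ge0}$ of a set $S\subseteq V$ with distinct labels on distinct vertices, such that every vertex of $V$ is dominated by some vertex of $S$, and some vertex of $S$ has label $0$. *)

theory Defs
  imports Main
begin

text \<open>A finite simple graph is given by a vertex set V and a symmetric irreflexive
edge relation E (only its restriction to V matters).\<close>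

definition walk :: "'a set \<Rightarrow> ('a \<Rightarrow> 'a \<Rightarrow> bool) \<Rightarrow> nat \<Rightarrow> 'a \<Rightarrow> 'a \<Rightarrow> bool" where
  "walk V E k u v \<longleftrightarrow> (\<exists>w :: nat \<Rightarrow> 'a. w 0 = u \<and> w k = v \<and> (\<forall>i\<le>k. w i \<in> V)
                         \<and> (\<forall>i<k. E (w i) (w (Suc i))))"

definition graph_dist_is :: "'a set \<Rightarrow> ('a \<Rightarrow> 'a \<Rightarrow> bool) \<Rightarrow> 'a \<Rightarrow> 'a \<Rightarrow> nat \<Rightarrow> bool" where
  "graph_dist_is V E u v l \<longleftrightarrow> walk V E l u v \<and> (\<forall>k<l. \<not> walk V E k u v)"

text \<open>Vertex v labelled l dominates u iff d(u,v) = l (label 0 dominates only v itself).\<close>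
definition dominates :: "'a set \<Rightarrow> ('a \<Rightarrow> 'a \<Rightarrow> bool) \<Rightarrow> 'a \<Rightarrow> nat \<Rightarrow> 'a \<Rightarrow> bool" where
  "dominates V E v l u \<longleftrightarrow> graph_dist_is V E u v l"

definition ext_irr_dom_labeling ::
  "'a set \<Rightarrow> ('a \<Rightarrow> 'a \<Rightarrow> bool) \<Rightarrow> 'a set \<Rightarrow> ('a \<Rightarrow> nat) \<Rightarrow> bool" where
  "ext_irr_dom_labeling V E S lam \<longleftrightarrow>
     S \<subseteq> V \<and> inj_on lam S
     \<and> (\<forall>u\<in>V. \<exists>v\<in>S. dominates V E v (lam v) u)
     \<and> (\<exists>v\<in>S. lam v = 0)"

definition admits_ext_irr_dom_labeling :: "'a set \<Rightarrow> ('a \<Rightarrow> 'a \<Rightarrow> bool) \<Rightarrow> bool" where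
  "admits_ext_irr_dom_labeling V E \<longleftrightarrow> (\<exists>S lam. ext_irr_dom_labeling V E S lam)"

text \<open>The path P_n on vertices x_1..x_n (identified with 1..n), edges {x_i, x_(i+1)}.\<close>
definition path_V :: "nat \<Rightarrow> nat set" where
  "path_V n = {1..n}"

definition path_E :: "nat \<Rightarrow> nat \<Rightarrow> bool" where
  "path_E i j \<longleftrightarrow> j = Suc i \<or> i = Suc j"

end

theory Submission
  imports Defs
begin

definition dst :: "nat \<Rightarrow> nat \<Rightarrow> nat" where
  "dst u v = (if u \<le> v then v - u else u - v)"

lemma walk_bound:
  assumes "walk (path_V n) path_E k u v"
  shows "u \<in> {1..n} \<and> v \<in> {1..n} \<and> dst u v \<le> k"
proof -
  obtain w where w0: "w 0 = u" and wk: "w k = v" and wV: "\<forall>i\<le>k. w i \<in> path_V n"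
    and wE: "\<forall>i<k. path_E (w i) (w (Suc i))"
    using assms unfolding walk_def by blast
  have "\<forall>i. i \<le> k \<longrightarrow> dst u (w i) \<le> i"
  proof
    fix i show "i \<le> k \<longrightarrow> dst u (w i) \<le> i"
    proof (induction i)
      case 0 then show ?case using w0 by (simp add: dst_def)
    next
      case (Suc i)
      show ?case
      proof
        assume "Suc i \<le> k"
        then have "dst u (w i) \<le> i" and "path_E (w i) (w (Suc i))" using Suc wE by auto
        then show "dst u (w (Suc i)) \<le> Suc i" unfolding path_E_def dst_def by (auto split: if_splits)
      qed
    qed
  qed
  then have "dst u v \<le> k" using wk by auto
  moreover have "u \<in> path_V n" "v \<in> path_V n" using wV w0 wk by (metis le0, metis order_refl)
  ultimately show ?thesis by (simp add: path_V_def)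
qed

lemma walk_exists:
  assumes "u \<in> {1..n}" "v \<in> {1..n}"
  shows "walk (path_V n) path_E (dst u v) u v"
proof (cases "u \<le> v")
  case True
  show ?thesis unfolding walk_def
    by (rule exI[where x="\<lambda>i. u + i"]) (use True assms in \<open>auto simp: dst_def path_V_def path_E_def\<close>)
next
  case False
  show ?thesis unfolding walk_def
    by (rule exI[where x="\<lambda>i. u - i"]) (use False assms in \<open>auto simp: dst_def path_V_def path_E_def\<close>)
qed

lemma dom_iff:
  "dominates (path_V n) path_E v l u \<longleftrightarrow> u \<in> {1..n} \<and> v \<in> {1..n} \<and> l = dst u v"
proof
  assume "dominates (path_V n) path_E v l u"
  then have W: "walk (path_V n) path_E l u v" and N: "\<forall>k<l. \<not> walk (path_V n) path_E k u v"
    unfolding dominates_def graph_dist_is_def by auto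
  from walk_bound[OF W] have B: "u \<in> {1..n}" "v \<in> {1..n}" "dst u v \<le> l" by auto
  have "\<not> dst u v < l" using N walk_exists[OF B(1,2)] by blast
  then show "u \<in> {1..n} \<and> v \<in> {1..n} \<and> l = dst u v" using B by auto
next
  assume A: "u \<in> {1..n} \<and> v \<in> {1..n} \<and> l = dst u v"
  show "dominates (path_V n) path_E v l u"
    unfolding dominates_def graph_dist_is_def
    using A walk_exists[of u n v] walk_bound[of n _ u v] by fastforce
qed

definition good :: "nat \<Rightarrow> nat set \<Rightarrow> (nat \<Rightarrow> nat) \<Rightarrow> bool" where
  "good n S lam \<longleftrightarrow> S \<subseteq> {1..n} \<and> inj_on lam S \<and> (\<forall>u\<in>{1..n}. \<exists>v\<in>S. lam v = dst u v)
     \<and> (\<exists>v\<in>S. lam v = 0)"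

lemma ext_iff: "ext_irr_dom_labeling (path_V n) path_E S lam \<longleftrightarrow> good n S lam"
  unfolding ext_irr_dom_labeling_def good_def dom_iff
  by (auto simp: path_V_def; fastforce)

lemma admits_iff: "admits_ext_irr_dom_labeling (path_V n) path_E \<longleftrightarrow> (\<exists>S lam. good n S lam)"
  unfolding admits_ext_irr_dom_labeling_def ext_iff ..

definition invP :: "nat \<Rightarrow> bool" where
  "invP n \<longleftrightarrow> (\<exists>S lam. good n S lam \<and> 1 \<notin> S \<and> (\<forall>v\<in>S. lam v < n))"

lemma invP_step:
  assumes "invP n"
  shows "invP (n+2)"
proof -
  obtain S lam where G: "good n S lam" and S1: "1 \<notin> S" and Sl: "\<forall>v\<in>S. lam v < n"
    using assms unfolding invP_def by blast
  have Ssub: "S \<subseteq> {1..n}" and inj: "inj_on lam S"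
    and cov: "\<forall>u\<in>{1..n}. \<exists>v\<in>S. lam v = dst u v" and z: "\<exists>v\<in>S. lam v = 0"
    using G unfolding good_def by auto
  have npos: "n \<ge> 1" using z Ssub by auto
  define S' where "S' = Suc ` S \<union> {2, n+2}"
  define lam' where "lam' = (\<lambda>v. if v = 2 then n else if v = n+2 then n+1 else lam (v-1))"
  have Sx: "2 \<le> x \<and> x \<le> n" if "x \<in> S" for x
  proof -
    have "x \<in> {1..n}" "x \<noteq> 1" using that Ssub S1 by auto
    then show ?thesis by auto
  qed
  have lamS: "x \<in> S \<Longrightarrow> lam' (Suc x) = lam x" for x using Sx[of x] by (auto simp: lam'_def)
  have "S' \<subseteq> {1..n+2}" using Sx by (force simp: S'_def)
  moreover have "inj_on lam' S'"
  proof (rule inj_onI)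
    fix a b assume a: "a \<in> S'" and b: "b \<in> S'" and e: "lam' a = lam' b"
    show "a = b"
    proof (cases "a \<in> Suc ` S")
      case True
      then obtain x where x: "x \<in> S" "a = Suc x" by auto
      show ?thesis
      proof (cases "b \<in> Suc ` S")
        case True
        then obtain y where y: "y \<in> S" "b = Suc y" by auto
        then show ?thesis using x e lamS inj by (metis inj_onD)
      next
        case False
        then have "b = 2 \<or> b = n+2" using b by (auto simp: S'_def)
        then show ?thesis using e x lamS[of x] Sl by (auto simp: lam'_def)
      qed
    next
      case False
      then have aa: "a = 2 \<or> a = n+2" using a by (auto simp: S'_def)
      show ?thesis
      proof (cases "b \<in> Suc ` S")
        case True
        then obtain y where y: "y \<in> S" "b = Suc y" by auto
        then show ?thesis using e aa lamS[of y] Sl by (auto simp: lam'_def)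
      next
        case False
        then have "b = 2 \<or> b = n+2" using b by (auto simp: S'_def)
        then show ?thesis using e aa by (auto simp: lam'_def split: if_splits)
      qed
    qed
  qed
  moreover have "\<forall>u\<in>{1..n+2}. \<exists>v\<in>S'. lam' v = dst u v"
  proof
    fix u assume u: "u \<in> {1..n+2}"
    show "\<exists>v\<in>S'. lam' v = dst u v"
    proof (cases "u = 1")
      case True
      then show ?thesis using npos by (intro bexI[where x="n+2"]) (auto simp: S'_def lam'_def dst_def)
    next
      case F1: False
      show ?thesis
      proof (cases "u = n+2")
        case True
        then show ?thesis by (intro bexI[where x="2"]) (auto simp: S'_def lam'_def dst_def)
      next
        case False
        then have "u - 1 \<in> {1..n}" using u F1 by auto
        then obtain v where v: "v \<in> S" "lam v = dst (u-1) v" using cov by blast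
        then show ?thesis using lamS[of v] F1 u
          by (intro bexI[where x="Suc v"]) (auto simp: S'_def dst_def)
      qed
    qed
  qed
  moreover have "\<exists>v\<in>S'. lam' v = 0" using z lamS by (auto simp: S'_def)
  moreover have "1 \<notin> S'" using S1 Sx by (force simp: S'_def)
  moreover have "\<forall>v\<in>S'. lam' v < n+2" using Sl lamS by (auto simp: S'_def lam'_def)
  ultimately show ?thesis unfolding invP_def good_def by blast
qed

lemma inv5: "invP 5"
proof -
  define lam :: "nat \<Rightarrow> nat" where "lam = (\<lambda>v. if v=4 then 0 else if v=2 then 1 else if v=5 then 3 else 2)"
  have "good 5 {2,3,4,5} lam"
    unfolding good_def
  proof (intro conjI)
    show "inj_on lam {2,3,4,5}" by (auto simp: lam_def inj_on_def)
    show "\<forall>u\<in>{1..5}. \<exists>v\<in>{2,3,4,5}. lam v = dst u v"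
    proof
      fix u :: nat assume "u \<in> {1..5}"
      then have "u = 1 \<or> u = 2 \<or> u = 3 \<or> u = 4 \<or> u = 5" by auto
      then show "\<exists>v\<in>{2,3,4,5}. lam v = dst u v"
        by (elim disjE) (auto simp: lam_def dst_def)
    qed
  qed (auto simp: lam_def)
  then show ?thesis unfolding invP_def by (intro exI[where x="{2,3,4,5}"] exI[where x=lam]) (auto simp: lam_def)
qed

lemma inv6: "invP 6"
proof -
  define lam :: "nat \<Rightarrow> nat" where "lam = (\<lambda>v. if v=2 then 0 else if v=3 then 2 else if v=6 then 3 else 1)"
  have "good 6 {2,3,5,6} lam"
    unfolding good_def
  proof (intro conjI)
    show "inj_on lam {2,3,5,6}" by (auto simp: lam_def inj_on_def)
    show "\<forall>u\<in>{1..6}. \<exists>v\<in>{2,3,5,6}. lam v = dst u v"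
    proof
      fix u :: nat assume "u \<in> {1..6}"
      then have "u = 1 \<or> u = 2 \<or> u = 3 \<or> u = 4 \<or> u = 5 \<or> u = 6" by auto
      then show "\<exists>v\<in>{2,3,5,6}. lam v = dst u v"
        by (elim disjE) (auto simp: lam_def dst_def)
    qed
  qed (auto simp: lam_def)
  then show ?thesis unfolding invP_def by (intro exI[where x="{2,3,5,6}"] exI[where x=lam]) (auto simp: lam_def)
qed

lemma inv_all: "invP (m+5) \<and> invP (m+6)"
proof (induction m)
  case 0 then show ?case using inv5 inv6 by simp
next
  case (Suc m)
  then show ?case using invP_step[of "m+5"] by (simp add: add.commute)
qed

lemma good4: "good 4 {1,2,3,4} (\<lambda>v. if v=1 then 3 else if v=2 then 0 else if v=3 then 2 else 1)"
  unfolding good_def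
proof (intro conjI)
  show "\<forall>u\<in>{1..4}. \<exists>v\<in>{1,2,3,4}. (\<lambda>v. if v=1 then 3 else if v=2 then 0 else if v=3 then 2 else 1) v = dst u v"
  proof
    fix u :: nat assume "u \<in> {1..4}"
    then have "u = 1 \<or> u = 2 \<or> u = 3 \<or> u = 4" by auto
    then show "\<exists>v\<in>{1,2,3,4}. (\<lambda>v. if v=1 then 3 else if v=2 then 0 else if v=3 then (2::nat) else 1) v = dst u v"
      by (elim disjE) (auto simp: dst_def)
  qed
qed (auto simp: inj_on_def)

lemma good1: "good 1 {1} (\<lambda>v. 0)"
  unfolding good_def by (auto simp: dst_def)

lemma not2: "\<not> good 2 S lam"
proof
  assume "good 2 S lam"
  then have Ss: "S \<subseteq> {1..2}" and inj: "inj_on lam S"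
    and cov: "\<forall>u\<in>{1..2}. \<exists>v\<in>S. lam v = dst u v" and z: "\<exists>v\<in>S. lam v = 0"
    unfolding good_def by auto
  obtain z where z: "z \<in> S" "lam z = 0" using z by blast
  obtain a where a: "a \<in> S" "lam a = dst 1 a" using bspec[OF cov, of 1] by auto
  obtain b where b: "b \<in> S" "lam b = dst 2 b" using bspec[OF cov, of 2] by auto
  have I: "\<And>x y. x \<in> S \<Longrightarrow> y \<in> S \<Longrightarrow> lam x = lam y \<Longrightarrow> x = y" using inj by (meson inj_onD)
  have J: "lam z = lam a \<longrightarrow> z = a" "lam z = lam b \<longrightarrow> z = b" "lam a = lam b \<longrightarrow> a = b"
    using I z a b by blast+
  have "z = 1 \<or> z = 2" "a = 1 \<or> a = 2" "b = 1 \<or> b = 2" using z a b Ss by auto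
  then show False using J z(2) a(2) b(2)
    by (elim disjE) (simp_all add: dst_def)
qed

lemma not3: "\<not> good 3 S lam"
proof
  assume "good 3 S lam"
  then have Ss: "S \<subseteq> {1..3}" and inj: "inj_on lam S"
    and cov: "\<forall>u\<in>{1..3}. \<exists>v\<in>S. lam v = dst u v" and z: "\<exists>v\<in>S. lam v = 0"
    unfolding good_def by auto
  obtain z where z: "z \<in> S" "lam z = 0" using z by blast
  obtain a where a: "a \<in> S" "lam a = dst 1 a" using bspec[OF cov, of 1] by auto
  obtain b where b: "b \<in> S" "lam b = dst 2 b" using bspec[OF cov, of 2] by auto
  obtain c where c: "c \<in> S" "lam c = dst 3 c" using bspec[OF cov, of 3] by auto
  have I: "\<And>x y. x \<in> S \<Longrightarrow> y \<in> S \<Longrightarrow> lam x = lam y \<Longrightarrow> x = y" using inj by (meson inj_onD)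
  have J: "lam z = lam a \<longrightarrow> z = a" "lam z = lam b \<longrightarrow> z = b" "lam z = lam c \<longrightarrow> z = c"
    "lam a = lam b \<longrightarrow> a = b" "lam a = lam c \<longrightarrow> a = c" "lam b = lam c \<longrightarrow> b = c"
    using I z a b c by blast+
  have "z = 1 \<or> z = 2 \<or> z = 3" "a = 1 \<or> a = 2 \<or> a = 3" "b = 1 \<or> b = 2 \<or> b = 3"
    "c = 1 \<or> c = 2 \<or> c = 3" using z a b c Ss by auto
  then show False using J z(2) a(2) b(2) c(2)
    by (elim disjE) (simp_all add: dst_def)
qed

theorem proposition5p5:
  fixes n :: nat
  assumes "n \<ge> 1"
  shows "admits_ext_irr_dom_labeling (path_V n) path_E \<longleftrightarrow> n \<noteq> 2 \<and> n \<noteq> 3"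
proof -
  have "(\<exists>S lam. good n S lam) \<longleftrightarrow> n \<noteq> 2 \<and> n \<noteq> 3"
  proof
    assume "\<exists>S lam. good n S lam"
    then show "n \<noteq> 2 \<and> n \<noteq> 3" using not2 not3 by blast
  next
    assume n: "n \<noteq> 2 \<and> n \<noteq> 3"
    show "\<exists>S lam. good n S lam"
    proof (cases "n \<ge> 5")
      case True
      then obtain m where "n = m + 5 \<or> n = m + 6"
        by (metis le_add_diff_inverse2)
      then have "invP n" using inv_all by blast
      then show ?thesis unfolding invP_def by blast
    next
      case False
      then have "n = 1 \<or> n = 4" using n assms by auto
      then show ?thesis using good1 good4 by blast
    qed
  qed
  then show ?thesis using admits_iff by simp
qed

end
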